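(* Consider a symmetric two-player game with pure strategy set $I=\{1,\dots,N\}$ and payoff matrix $\mathbf{U}=(u_{ij})$. Let $I'\subset I$. For $\mathbf{x}\in S_N$ define $\mathbf{x}'\in\mathbb{R}_+^N$ by $x'_i=x_i$ if $i\in I'$ and $x'_i=0$ otherwise, and let $x(I')=\sum_{i\in I'}x_i$; define $\mathbf{y}'$, $y(I')$ similarly. Let $(\mathbf{x},\mathbf{y})$ be a Nash equilibrium with $x(I')\,y(I')>0$, and assume that for all $i,j\in I'$, $$[\mathbf{U}(\mathbf{y}-\mathbf{y}')]_i=[\mathbf{U}(\mathbf{y}-\mathbf{y}')]_j\quad\text{and}\quad[\mathbf{U}(\mathbf{x}-\mathbf{x}')]_i=[\mathbf{U}(\mathbf{x}-\mathbf{x}')]_j.$$ Then for all $i,j\in I'$: if $x'_i>0$ then $(\mathbf{U}\mathbf{y}')_i\ge(\mathbf{U}\mathbf{y}')_j$, and if $y'_i>0$ then $(\mathbf{U}\mathbf{x}')_i\ge(\mathbf{U}\mathbf{x}')_j$.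
   Context: $S_N=\{\mathbf{x}\in\mathbb{R}_+^N:\sum_i x_i=1\}$. In the symmetric game, for the mixed profile $(\mathbf{x},\mathbf{y})$ the row player gets $\mathbf{x}\cdot\mathbf{U}\mathbf{y}$ and the column player gets $\mathbf{y}\cdot\mathbf{U}\mathbf{x}$; a Nash equilibrium is a pair of mutual best replies. *)

theory Defs
  imports "HOL-Analysis.Analysis"
begin

text \<open>Pure strategies are indexed by a finite type 'n (so N = CARD('n)).
  The payoff matrix U is a real 'n x 'n matrix, mixed strategies are vectors in real^'n.\<close>

definition mixed_strats :: "(real ^ 'n::finite) set" where
  "mixed_strats = {x. (\<forall>i. 0 \<le> x $ i) \<and> (\<Sum>i\<in>UNIV. x $ i) = 1}"

definition nash_eq :: "real ^ 'n ^ 'n \<Rightarrow> real ^ 'n::finite \<Rightarrow> real ^ 'n \<Rightarrow> bool" where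
  "nash_eq U x y \<longleftrightarrow> x \<in> mixed_strats \<and> y \<in> mixed_strats \<and>
     (\<forall>x2 \<in> mixed_strats. x2 \<bullet> (U *v y) \<le> x \<bullet> (U *v y)) \<and>
     (\<forall>y2 \<in> mixed_strats. y2 \<bullet> (U *v x) \<le> y \<bullet> (U *v x))"

definition restr :: "'n::finite set \<Rightarrow> real ^ 'n \<Rightarrow> real ^ 'n" where
  "restr I' x = (\<chi> i. if i \<in> I' then x $ i else 0)"

definition mass :: "'n::finite set \<Rightarrow> real ^ 'n \<Rightarrow> real" where
  "mass I' x = (\<Sum>i\<in>I'. x $ i)"

end

theory Submission
  imports Defs
begin

lemma best_reply:
  fixes x v :: "real ^ 'n::finite"
  assumes xm: "x \<in> mixed_strats"
    and br: "\<forall>x2 \<in> mixed_strats. x2 \<bullet> v \<le> x \<bullet> v"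
    and xi: "x $ i > 0"
  shows "v $ i \<ge> v $ j"
proof (cases "i = j")
  case True then show ?thesis by simp
next
  case False
  define x2 where "x2 = x + (x $ i) *\<^sub>R (axis j 1 - axis i 1)"
  have c: "x2 $ k = x $ k + x $ i * ((if k = j then 1 else 0) - (if k = i then 1 else 0))" for k
    by (simp add: x2_def axis_def)
  have "\<forall>k. 0 \<le> x2 $ k"
  proof
    fix k
    show "0 \<le> x2 $ k" using xm False xi unfolding c mixed_strats_def
      by (cases "k = i"; cases "k = j") auto
  qed
  moreover have "(\<Sum>k\<in>UNIV. x2 $ k) = 1"
    using xm unfolding c mixed_strats_def
    by (simp add: sum.distrib sum_subtractf sum_distrib_left[symmetric] algebra_simps)
  ultimately have "x2 \<in> mixed_strats" by (simp add: mixed_strats_def)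
  with br have "x2 \<bullet> v \<le> x \<bullet> v" by blast
  moreover have "x2 \<bullet> v = x \<bullet> v + x $ i * (v $ j - v $ i)"
    by (simp add: x2_def inner_add_left inner_diff_left inner_axis' algebra_simps)
  ultimately have "x $ i * (v $ j - v $ i) \<le> 0" by simp
  with xi show ?thesis by (simp add: mult_le_0_iff)
qed

theorem lemma4:
  fixes U :: "real ^ 'n ^ 'n" and x y :: "real ^ 'n::finite" and I' :: "'n set"
  assumes nash: "nash_eq U x y"
    and pos: "mass I' x * mass I' y > 0"
    and eqy: "\<forall>i\<in>I'. \<forall>j\<in>I'. (U *v (y - restr I' y)) $ i = (U *v (y - restr I' y)) $ j"
    and eqx: "\<forall>i\<in>I'. \<forall>j\<in>I'. (U *v (x - restr I' x)) $ i = (U *v (x - restr I' x)) $ j"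
  shows "\<forall>i\<in>I'. \<forall>j\<in>I'.
           (restr I' x $ i > 0 \<longrightarrow> (U *v restr I' y) $ i \<ge> (U *v restr I' y) $ j) \<and>
           (restr I' y $ i > 0 \<longrightarrow> (U *v restr I' x) $ i \<ge> (U *v restr I' x) $ j)"
proof (intro ballI conjI impI)
  fix i j assume i: "i \<in> I'" and j: "j \<in> I'"
  have split: "U *v z = U *v (z - restr I' z) + U *v restr I' z" for z :: "real ^ 'n"
    by (simp add: matrix_vector_right_distrib[symmetric])
  {
    assume "restr I' x $ i > 0"
    then have "x $ i > 0" using i by (simp add: restr_def)
    then have "(U *v y) $ i \<ge> (U *v y) $ j"
      using best_reply[of x "U *v y" i j] nash unfolding nash_eq_def by blast
    then show "(U *v restr I' y) $ i \<ge> (U *v restr I' y) $ j"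
      using eqy i j split[of y] by (metis add_le_cancel_left vector_add_component)
  }
  {
    assume "restr I' y $ i > 0"
    then have "y $ i > 0" using i by (simp add: restr_def)
    then have "(U *v x) $ i \<ge> (U *v x) $ j"
      using best_reply[of y "U *v x" i j] nash unfolding nash_eq_def by blast
    then show "(U *v restr I' x) $ i \<ge> (U *v restr I' x) $ j"
      using eqx i j split[of x] by (metis add_le_cancel_left vector_add_component)
  }
qed

end
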